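(* If $n,m\ge 2$, then the LC orbit of the complete bipartite graph $K_{n,m}$ has size $|\mathcal{O}(K_{n,m})|=nm+n+m+3$.
   Context: For a graph $G$ and vertex $v$, the local complement $c_v(G)$ is the graph on $V(G)$ obtained by complementing the edges among the neighbours of $v$. $\mathcal{O}(G)$ is the set of all graphs on the labelled vertex set $V(G)$ obtainable from $G$ by finite sequences of local complements; graphs are labelled, so isomorphic but distinct graphs are counted separately. *)

theory Defs
  imports Main
begin

text \<open>A simple graph on a labelled vertex set V is represented by its edge set,
  a set of 2-element subsets of V.\<close>

definition nbrs :: "'a set set \<Rightarrow> 'a \<Rightarrow> 'a set" where
  "nbrs E v = {u. u \<noteq> v \<and> {u, v} \<in> E}"

definition local_comp :: "'a set set \<Rightarrow> 'a \<Rightarrow> 'a set set" where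
  "local_comp E v =
     (let P = {{x, y} | x y. x \<in> nbrs E v \<and> y \<in> nbrs E v \<and> x \<noteq> y}
      in (E - P) \<union> (P - E))"

inductive_set lc_orbit :: "'a set \<Rightarrow> 'a set set \<Rightarrow> 'a set set set"
  for V :: "'a set" and E :: "'a set set" where
  base: "E \<in> lc_orbit V E"
| step: "G \<in> lc_orbit V E \<Longrightarrow> v \<in> V \<Longrightarrow> local_comp G v \<in> lc_orbit V E"

definition complete_bipartite :: "'a set \<Rightarrow> 'a set \<Rightarrow> 'a set set" where
  "complete_bipartite A B = {{a, b} | a b. a \<in> A \<and> b \<in> B}"

end

theory Submission
  imports Defs
begin

definition gr :: "('a \<Rightarrow> 'a \<Rightarrow> bool) \<Rightarrow> 'a set set" where
  "gr R = {{x, y} | x y. x \<noteq> y \<and> (R x y \<or> R y x)}"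

lemma mem_gr: "{x, y} \<in> gr R \<longleftrightarrow> x \<noteq> y \<and> (R x y \<or> R y x)"
  unfolding gr_def by (auto simp: doubleton_eq_iff)

lemma gr_elem: "e \<in> gr R \<Longrightarrow> \<exists>x y. e = {x, y} \<and> x \<noteq> y"
  unfolding gr_def by auto

lemma gr_eq_iff: "gr R1 = gr R2 \<longleftrightarrow> (\<forall>x y. x \<noteq> y \<longrightarrow> (R1 x y \<or> R1 y x) = (R2 x y \<or> R2 y x))"
proof
  assume "gr R1 = gr R2"
  then show "\<forall>x y. x \<noteq> y \<longrightarrow> (R1 x y \<or> R1 y x) = (R2 x y \<or> R2 y x)"
    by (metis mem_gr)
next
  assume H: "\<forall>x y. x \<noteq> y \<longrightarrow> (R1 x y \<or> R1 y x) = (R2 x y \<or> R2 y x)"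
  show "gr R1 = gr R2"
  proof (rule set_eqI)
    fix e
    show "e \<in> gr R1 \<longleftrightarrow> e \<in> gr R2"
      using H gr_elem[of e R1] gr_elem[of e R2] mem_gr by metis
  qed
qed

lemma gr_eqI: "(\<And>x y. x \<noteq> y \<Longrightarrow> (R1 x y \<or> R1 y x) = (R2 x y \<or> R2 y x)) \<Longrightarrow> gr R1 = gr R2"
  using gr_eq_iff by blast

lemma gr_neq: "x \<noteq> y \<Longrightarrow> (R1 x y \<or> R1 y x) \<noteq> (R2 x y \<or> R2 y x) \<Longrightarrow> gr R1 \<noteq> gr R2"
  using gr_eq_iff by metis

lemma nbrs_gr: "nbrs (gr R) v = {u. u \<noteq> v \<and> (R u v \<or> R v u)}"
  unfolding nbrs_def by (auto simp: mem_gr)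

lemma lc_gr: "local_comp (gr R) v = gr (\<lambda>x y. (R x y \<or> R y x) \<noteq>
   (x \<noteq> v \<and> y \<noteq> v \<and> (R x v \<or> R v x) \<and> (R y v \<or> R v y)))"
proof -
  define N where "N = nbrs (gr R) v"
  have P: "{{x, y} | x y. x \<in> N \<and> y \<in> N \<and> x \<noteq> y} = gr (\<lambda>x y. x \<in> N \<and> y \<in> N)"
    unfolding gr_def by blast
  have N: "N = {u. u \<noteq> v \<and> (R u v \<or> R v u)}" unfolding N_def nbrs_gr ..
  show ?thesis
  proof (rule set_eqI)
    fix e
    show "e \<in> local_comp (gr R) v \<longleftrightarrow> e \<in> gr (\<lambda>x y. (R x y \<or> R y x) \<noteq>
       (x \<noteq> v \<and> y \<noteq> v \<and> (R x v \<or> R v x) \<and> (R y v \<or> R v y)))"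
    proof (cases "\<exists>x y. e = {x, y} \<and> x \<noteq> y")
      case True
      then obtain x y where e: "e = {x, y}" "x \<noteq> y" by blast
      show ?thesis unfolding local_comp_def Let_def N_def[symmetric] P e
        by (simp only: Un_iff Diff_iff mem_gr N mem_Collect_eq) blast
    next
      case False
      then show ?thesis unfolding local_comp_def Let_def N_def[symmetric] P
        using gr_elem by blast
    qed
  qed
qed


definition rK :: "'a set \<Rightarrow> 'a set \<Rightarrow> 'a \<Rightarrow> 'a \<Rightarrow> bool" where
  "rK A B x y = (x \<in> A \<and> y \<in> B)"
definition rKA :: "'a set \<Rightarrow> 'a set \<Rightarrow> 'a \<Rightarrow> 'a \<Rightarrow> bool" where
  "rKA A B x y = ((x \<in> A \<and> y \<in> B) \<or> (x \<in> A \<and> y \<in> A))"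
definition rKB :: "'a set \<Rightarrow> 'a set \<Rightarrow> 'a \<Rightarrow> 'a \<Rightarrow> bool" where
  "rKB A B x y = ((x \<in> A \<and> y \<in> B) \<or> (x \<in> B \<and> y \<in> B))"
definition rS :: "'a set \<Rightarrow> 'a set \<Rightarrow> 'a \<Rightarrow> 'a set \<Rightarrow> 'a \<Rightarrow> 'a \<Rightarrow> bool" where
  "rS A B c C x y = ((x = c \<and> y \<in> A \<union> B) \<or> (x \<in> C \<and> y \<in> C))"
definition rD :: "'a set \<Rightarrow> 'a set \<Rightarrow> 'a \<Rightarrow> 'a \<Rightarrow> 'a \<Rightarrow> 'a \<Rightarrow> bool" where
  "rD A B a b x y = ((x = a \<and> y = b) \<or> (x = a \<and> y \<in> A) \<or> (x = b \<and> y \<in> B))"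

lemmas rdefs = rK_def rKA_def rKB_def rS_def rD_def

definition fam :: "'a set \<Rightarrow> 'a set \<Rightarrow> 'a set set set" where
  "fam A B = {gr (rK A B), gr (rKA A B), gr (rKB A B)} \<union> (\<lambda>a. gr (rS A B a B)) ` A
     \<union> (\<lambda>b. gr (rS A B b A)) ` B \<union> (\<lambda>(a, b). gr (rD A B a b)) ` (A \<times> B)"

context
  fixes A B :: "'a set"
  assumes disj: "A \<inter> B = {}"
begin

lemma lc1: "v \<in> A \<Longrightarrow> local_comp (gr (rK A B)) v = gr (rKB A B)"
  unfolding lc_gr
  apply (rule gr_eqI)
  subgoal for x y using disj
    by (cases "x = v"; cases "y = v"; cases "x \<in> A"; cases "y \<in> A"; cases "x \<in> B"; cases "y \<in> B"; simp add: rdefs; blast)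
  done
lemma lc2: "v \<in> B \<Longrightarrow> local_comp (gr (rK A B)) v = gr (rKA A B)"
  unfolding lc_gr
  apply (rule gr_eqI)
  subgoal for x y using disj
    by (cases "x = v"; cases "y = v"; cases "x \<in> A"; cases "y \<in> A"; cases "x \<in> B"; cases "y \<in> B"; simp add: rdefs; blast)
  done
lemma lc3: "v \<in> A \<Longrightarrow> local_comp (gr (rKA A B)) v = gr (rS A B v B)"
  unfolding lc_gr
  apply (rule gr_eqI)
  subgoal for x y using disj
    by (cases "x = v"; cases "y = v"; cases "x \<in> A"; cases "y \<in> A"; cases "x \<in> B"; cases "y \<in> B"; simp add: rdefs; blast)
  done
lemma lc4: "v \<in> B \<Longrightarrow> local_comp (gr (rKA A B)) v = gr (rK A B)"
  unfolding lc_gr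
  apply (rule gr_eqI)
  subgoal for x y using disj
    by (cases "x = v"; cases "y = v"; cases "x \<in> A"; cases "y \<in> A"; cases "x \<in> B"; cases "y \<in> B"; simp add: rdefs; blast)
  done
lemma lc5: "v \<in> B \<Longrightarrow> local_comp (gr (rKB A B)) v = gr (rS A B v A)"
  unfolding lc_gr
  apply (rule gr_eqI)
  subgoal for x y using disj
    by (cases "x = v"; cases "y = v"; cases "x \<in> A"; cases "y \<in> A"; cases "x \<in> B"; cases "y \<in> B"; simp add: rdefs; blast)
  done
lemma lc6: "v \<in> A \<Longrightarrow> local_comp (gr (rKB A B)) v = gr (rK A B)"
  unfolding lc_gr
  apply (rule gr_eqI)
  subgoal for x y using disj
    by (cases "x = v"; cases "y = v"; cases "x \<in> A"; cases "y \<in> A"; cases "x \<in> B"; cases "y \<in> B"; simp add: rdefs; blast)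
  done
lemma lc7: "a \<in> A \<Longrightarrow> local_comp (gr (rS A B a B)) a = gr (rKA A B)"
  unfolding lc_gr
  apply (rule gr_eqI)
  subgoal for x y using disj
    by (cases "x = a"; cases "y = a"; cases "x \<in> A"; cases "y \<in> A"; cases "x \<in> B"; cases "y \<in> B"; simp add: rdefs; blast)
  done
lemma lc8: "a \<in> A \<Longrightarrow> v \<in> A \<Longrightarrow> v \<noteq> a \<Longrightarrow> local_comp (gr (rS A B a B)) v = gr (rS A B a B)"
  unfolding lc_gr
  apply (rule gr_eqI)
  subgoal for x y using disj
    by (cases "x = v"; cases "y = v"; cases "x = a"; cases "y = a"; cases "x \<in> A"; cases "y \<in> A"; cases "x \<in> B"; cases "y \<in> B"; simp add: rdefs; blast)
  done
lemma lc9: "a \<in> A \<Longrightarrow> v \<in> B \<Longrightarrow> local_comp (gr (rS A B a B)) v = gr (rD A B a v)"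
  unfolding lc_gr
  apply (rule gr_eqI)
  subgoal for x y using disj
    by (cases "x = v"; cases "y = v"; cases "x = a"; cases "y = a"; cases "x \<in> A"; cases "y \<in> A"; cases "x \<in> B"; cases "y \<in> B"; simp add: rdefs; blast)
  done
lemma lc10: "b \<in> B \<Longrightarrow> local_comp (gr (rS A B b A)) b = gr (rKB A B)"
  unfolding lc_gr
  apply (rule gr_eqI)
  subgoal for x y using disj
    by (cases "x = b"; cases "y = b"; cases "x \<in> A"; cases "y \<in> A"; cases "x \<in> B"; cases "y \<in> B"; simp add: rdefs; blast)
  done
lemma lc11: "b \<in> B \<Longrightarrow> v \<in> B \<Longrightarrow> v \<noteq> b \<Longrightarrow> local_comp (gr (rS A B b A)) v = gr (rS A B b A)"
  unfolding lc_gr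
  apply (rule gr_eqI)
  subgoal for x y using disj
    by (cases "x = v"; cases "y = v"; cases "x = b"; cases "y = b"; cases "x \<in> A"; cases "y \<in> A"; cases "x \<in> B"; cases "y \<in> B"; simp add: rdefs; blast)
  done
lemma lc12: "b \<in> B \<Longrightarrow> v \<in> A \<Longrightarrow> local_comp (gr (rS A B b A)) v = gr (rD A B v b)"
  unfolding lc_gr
  apply (rule gr_eqI)
  subgoal for x y using disj
    by (cases "x = v"; cases "y = v"; cases "x = b"; cases "y = b"; cases "x \<in> A"; cases "y \<in> A"; cases "x \<in> B"; cases "y \<in> B"; simp add: rdefs; blast)
  done
lemma lc13: "a \<in> A \<Longrightarrow> b \<in> B \<Longrightarrow> local_comp (gr (rD A B a b)) a = gr (rS A B b A)"
  unfolding lc_gr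
  apply (rule gr_eqI)
  subgoal for x y using disj
    by (cases "x = a"; cases "y = a"; cases "x = b"; cases "y = b"; cases "x \<in> A"; cases "y \<in> A"; cases "x \<in> B"; cases "y \<in> B"; simp add: rdefs; blast)
  done
lemma lc14: "a \<in> A \<Longrightarrow> b \<in> B \<Longrightarrow> local_comp (gr (rD A B a b)) b = gr (rS A B a B)"
  unfolding lc_gr
  apply (rule gr_eqI)
  subgoal for x y using disj
    by (cases "x = a"; cases "y = a"; cases "x = b"; cases "y = b"; cases "x \<in> A"; cases "y \<in> A"; cases "x \<in> B"; cases "y \<in> B"; simp add: rdefs; blast)
  done
lemma lc15: "a \<in> A \<Longrightarrow> b \<in> B \<Longrightarrow> v \<in> A \<union> B \<Longrightarrow> v \<noteq> a \<Longrightarrow> v \<noteq> b \<Longrightarrow>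
   local_comp (gr (rD A B a b)) v = gr (rD A B a b)"
  unfolding lc_gr
  apply (rule gr_eqI)
  subgoal for x y using disj
    by (cases "x = v"; cases "y = v"; cases "x = a"; cases "y = a"; cases "x = b"; cases "y = b"; cases "x \<in> A"; cases "y \<in> A"; cases "x \<in> B"; cases "y \<in> B"; simp add: rdefs; blast)
  done

lemma fam_closed:
  assumes G: "G \<in> fam A B" and v: "v \<in> A \<union> B"
  shows "local_comp G v \<in> fam A B"
proof -
  have "G = gr (rK A B) \<or> G = gr (rKA A B) \<or> G = gr (rKB A B) \<or>
    (\<exists>a\<in>A. G = gr (rS A B a B)) \<or> (\<exists>b\<in>B. G = gr (rS A B b A)) \<or>
    (\<exists>a\<in>A. \<exists>b\<in>B. G = gr (rD A B a b))"
    using G unfolding fam_def by auto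
  then show ?thesis
  proof (elim disjE bexE)
    assume "G = gr (rK A B)"
    then show ?thesis using v lc1 lc2 unfolding fam_def by auto
  next
    assume "G = gr (rKA A B)"
    then show ?thesis using v lc3 lc4 unfolding fam_def by auto
  next
    assume "G = gr (rKB A B)"
    then show ?thesis using v lc5 lc6 unfolding fam_def by auto
  next
    fix a assume "a \<in> A" "G = gr (rS A B a B)"
    then show ?thesis
      using v lc7 lc8 lc9 unfolding fam_def by (cases "v = a") auto
  next
    fix b assume "b \<in> B" "G = gr (rS A B b A)"
    then show ?thesis
      using v lc10 lc11 lc12 unfolding fam_def by (cases "v = b") auto
  next
    fix a b assume ab: "a \<in> A" "b \<in> B" and "G = gr (rD A B a b)"
    then show ?thesis
      using v lc13[OF ab] lc14[OF ab] lc15[OF ab v] unfolding fam_def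
      by (cases "v = a"; cases "v = b") auto
  qed
qed

lemma cb_gr: "complete_bipartite A B = gr (rK A B)"
  unfolding complete_bipartite_def gr_def rK_def using disj
  apply (auto simp: insert_commute)
  by blast

lemma orbit_sub: "G \<in> lc_orbit (A \<union> B) (complete_bipartite A B) \<Longrightarrow> G \<in> fam A B"
proof (induct rule: lc_orbit.induct)
  case base
  then show ?case unfolding cb_gr fam_def by simp
next
  case (step G v)
  then show ?case using fam_closed by blast
qed

lemma fam_sub:
  assumes "A \<noteq> {}" "B \<noteq> {}"
  shows "fam A B \<subseteq> lc_orbit (A \<union> B) (complete_bipartite A B)"
proof -
  obtain a0 b0 where a0: "a0 \<in> A" and b0: "b0 \<in> B" using assms by blast
  let ?O = "lc_orbit (A \<union> B) (complete_bipartite A B)"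
  have K: "gr (rK A B) \<in> ?O" using lc_orbit.base cb_gr by metis
  have KA: "gr (rKA A B) \<in> ?O" using lc_orbit.step[OF K, of b0] b0 lc2[OF b0] by simp
  have KB: "gr (rKB A B) \<in> ?O" using lc_orbit.step[OF K, of a0] a0 lc1[OF a0] by simp
  have SA: "gr (rS A B a B) \<in> ?O" if "a \<in> A" for a
    using lc_orbit.step[OF KA, of a] that lc3[OF that] by simp
  have SB: "gr (rS A B b A) \<in> ?O" if "b \<in> B" for b
    using lc_orbit.step[OF KB, of b] that lc5[OF that] by simp
  have DD: "gr (rD A B a b) \<in> ?O" if "a \<in> A" "b \<in> B" for a b
    using lc_orbit.step[OF SA[OF that(1)], of b] that lc9[OF that] by simp
  show ?thesis unfolding fam_def using K KA KB SA SB DD by auto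
qed

lemma n1: "a1 \<in> A \<Longrightarrow> a2 \<in> A \<Longrightarrow> a1 \<noteq> a2 \<Longrightarrow> gr (rK A B) \<noteq> gr (rKA A B)"
  by (rule gr_neq[of a1 a2]) (use disj in \<open>auto simp: rdefs\<close>)
lemma n2: "b1 \<in> B \<Longrightarrow> b2 \<in> B \<Longrightarrow> b1 \<noteq> b2 \<Longrightarrow> gr (rK A B) \<noteq> gr (rKB A B)"
  by (rule gr_neq[of b1 b2]) (use disj in \<open>auto simp: rdefs\<close>)
lemma n3: "a1 \<in> A \<Longrightarrow> a2 \<in> A \<Longrightarrow> a1 \<noteq> a2 \<Longrightarrow> gr (rKA A B) \<noteq> gr (rKB A B)"
  by (rule gr_neq[of a1 a2]) (use disj in \<open>auto simp: rdefs\<close>)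
lemma n4: "a \<in> A \<Longrightarrow> b1 \<in> B \<Longrightarrow> b2 \<in> B \<Longrightarrow> b1 \<noteq> b2 \<Longrightarrow> gr (rS A B a B) \<noteq> gr (rK A B)"
  by (rule gr_neq[of b1 b2]) (use disj in \<open>auto simp: rdefs\<close>)
lemma n5: "a \<in> A \<Longrightarrow> a' \<in> A \<Longrightarrow> b \<in> B \<Longrightarrow> a \<noteq> a' \<Longrightarrow> gr (rS A B a B) \<noteq> gr (rKA A B)"
  by (rule gr_neq[of a' b]) (use disj in \<open>auto simp: rdefs\<close>)
lemma n6: "a \<in> A \<Longrightarrow> a' \<in> A \<Longrightarrow> b \<in> B \<Longrightarrow> a \<noteq> a' \<Longrightarrow> gr (rS A B a B) \<noteq> gr (rKB A B)"
  by (rule gr_neq[of a' b]) (use disj in \<open>auto simp: rdefs\<close>)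
lemma n7: "b \<in> B \<Longrightarrow> a1 \<in> A \<Longrightarrow> a2 \<in> A \<Longrightarrow> a1 \<noteq> a2 \<Longrightarrow> gr (rS A B b A) \<noteq> gr (rK A B)"
  by (rule gr_neq[of a1 a2]) (use disj in \<open>auto simp: rdefs\<close>)
lemma n8: "b \<in> B \<Longrightarrow> b' \<in> B \<Longrightarrow> a \<in> A \<Longrightarrow> b \<noteq> b' \<Longrightarrow> gr (rS A B b A) \<noteq> gr (rKA A B)"
  by (rule gr_neq[of a b']) (use disj in \<open>auto simp: rdefs\<close>)
lemma n9: "b \<in> B \<Longrightarrow> b' \<in> B \<Longrightarrow> a \<in> A \<Longrightarrow> b \<noteq> b' \<Longrightarrow> gr (rS A B b A) \<noteq> gr (rKB A B)"
  by (rule gr_neq[of a b']) (use disj in \<open>auto simp: rdefs\<close>)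
lemma n10: "a \<in> A \<Longrightarrow> a' \<in> A \<Longrightarrow> b \<in> B \<Longrightarrow> a \<noteq> a' \<Longrightarrow> gr (rD A B a b) \<noteq> gr (rK A B)"
  by (rule gr_neq[of a a']) (use disj in \<open>auto simp: rdefs\<close>)
lemma n11: "a \<in> A \<Longrightarrow> a' \<in> A \<Longrightarrow> b \<in> B \<Longrightarrow> a \<noteq> a' \<Longrightarrow> gr (rD A B a b) \<noteq> gr (rKA A B)"
  by (rule gr_neq[of a' b]) (use disj in \<open>auto simp: rdefs\<close>)
lemma n12: "a \<in> A \<Longrightarrow> a' \<in> A \<Longrightarrow> b \<in> B \<Longrightarrow> a \<noteq> a' \<Longrightarrow> gr (rD A B a b) \<noteq> gr (rKB A B)"
  by (rule gr_neq[of a' b]) (use disj in \<open>auto simp: rdefs\<close>)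
lemma n13: "a \<in> A \<Longrightarrow> b \<in> B \<Longrightarrow> b' \<in> B \<Longrightarrow> b \<noteq> b' \<Longrightarrow> gr (rS A B a B) \<noteq> gr (rS A B b' A)"
  by (rule gr_neq[of a b]) (use disj in \<open>auto simp: rdefs\<close>)
lemma n14: "a \<in> A \<Longrightarrow> a' \<in> A \<Longrightarrow> b \<in> B \<Longrightarrow> b' \<in> B \<Longrightarrow> b \<noteq> b' \<Longrightarrow> gr (rS A B a B) \<noteq> gr (rD A B a' b)"
  by (rule gr_neq[of a b']) (use disj in \<open>auto simp: rdefs\<close>)
lemma n15: "a \<in> A \<Longrightarrow> a' \<in> A \<Longrightarrow> b \<in> B \<Longrightarrow> b' \<in> B \<Longrightarrow> a \<noteq> a' \<Longrightarrow> gr (rS A B b A) \<noteq> gr (rD A B a b')"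
  by (rule gr_neq[of a' b]) (use disj in \<open>auto simp: rdefs\<close>)
lemma n16: "a \<in> A \<Longrightarrow> a' \<in> A \<Longrightarrow> b \<in> B \<Longrightarrow> a \<noteq> a' \<Longrightarrow> gr (rS A B a B) \<noteq> gr (rS A B a' B)"
  by (rule gr_neq[of a b]) (use disj in \<open>auto simp: rdefs\<close>)
lemma n17: "b \<in> B \<Longrightarrow> b' \<in> B \<Longrightarrow> a \<in> A \<Longrightarrow> b \<noteq> b' \<Longrightarrow> gr (rS A B b A) \<noteq> gr (rS A B b' A)"
  by (rule gr_neq[of a b]) (use disj in \<open>auto simp: rdefs\<close>)
lemma n18: "a \<in> A \<Longrightarrow> a' \<in> A \<Longrightarrow> b \<in> B \<Longrightarrow> b' \<in> B \<Longrightarrow> (a, b) \<noteq> (a', b') \<Longrightarrow> gr (rD A B a b) \<noteq> gr (rD A B a' b')"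
  by (rule gr_neq[of a b]) (use disj in \<open>auto simp: rdefs\<close>)


end

lemma other: "finite X \<Longrightarrow> card X \<ge> 2 \<Longrightarrow> \<exists>y\<in>X. y \<noteq> x"
proof (rule ccontr)
  assume "finite X" "card X \<ge> 2" "\<not> (\<exists>y\<in>X. y \<noteq> x)"
  then have "X \<subseteq> {x}" by blast
  then have "card X \<le> 1" using card_mono[of "{x}" X] by simp
  with \<open>card X \<ge> 2\<close> show False by simp
qed


theorem theorem4:
  fixes A B :: "'a set" and n m :: nat
  assumes "finite A" "finite B" "A \<inter> B = {}"
    and "card A = n" "card B = m" "n \<ge> 2" "m \<ge> 2"
  shows "card (lc_orbit (A \<union> B) (complete_bipartite A B)) = n * m + n + m + 3"
proof -
  note disj = assms(3)
  have oA: "\<And>x. \<exists>y\<in>A. y \<noteq> x" using other assms by auto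
  have oB: "\<And>x. \<exists>y\<in>B. y \<noteq> x" using other assms by auto
  obtain a0 where a0: "a0 \<in> A" using oA by blast
  obtain b0 where b0: "b0 \<in> B" using oB by blast
  obtain a1 where a1: "a1 \<in> A" "a1 \<noteq> a0" using oA by blast
  obtain b1 where b1: "b1 \<in> B" "b1 \<noteq> b0" using oB by blast
  have eq: "lc_orbit (A \<union> B) (complete_bipartite A B) = fam A B"
    using orbit_sub[OF disj] fam_sub[OF disj] a0 b0 by blast
  define T where "T = {gr (rK A B), gr (rKA A B), gr (rKB A B)}"
  define SA where "SA = (\<lambda>a. gr (rS A B a B)) ` A"
  define SB where "SB = (\<lambda>b. gr (rS A B b A)) ` B"
  define DD where "DD = (\<lambda>(a, b). gr (rD A B a b)) ` (A \<times> B)"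
  have cT: "card T = 3" unfolding T_def
    using n1[OF disj a0 a1(1)] n2[OF disj b0 b1(1)] n3[OF disj a0 a1(1)] a1 b1 by auto
  have cSA: "card SA = n" unfolding SA_def
  proof (subst card_image)
    show "inj_on (\<lambda>a. gr (rS A B a B)) A"
      unfolding inj_on_def using n16[OF disj _ _ b0] by blast
  qed (use assms in auto)
  have cSB: "card SB = m" unfolding SB_def
  proof (subst card_image)
    show "inj_on (\<lambda>b. gr (rS A B b A)) B"
      unfolding inj_on_def using n17[OF disj _ _ a0] by blast
  qed (use assms in auto)
  have cDD: "card DD = n * m" unfolding DD_def
  proof (subst card_image)
    show "inj_on (\<lambda>(a, b). gr (rD A B a b)) (A \<times> B)"
      unfolding inj_on_def using n18[OF disj] by fast
  qed (use assms in \<open>auto simp: card_cartesian_product\<close>)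
  have d1: "T \<inter> SA = {}"
  proof -
    { fix a assume a: "a \<in> A"
      obtain a' where "a' \<in> A" "a' \<noteq> a" using oA by blast
      then have "gr (rS A B a B) \<notin> T" unfolding T_def
        using n4[OF disj a b0 b1(1)] n5[OF disj a _ b0] n6[OF disj a _ b0] b1 by auto }
    then show ?thesis unfolding SA_def by blast
  qed
  have d2: "(T \<union> SA) \<inter> SB = {}"
  proof -
    { fix b assume b: "b \<in> B"
      obtain b' where "b' \<in> B" "b' \<noteq> b" using oB by blast
      then have "gr (rS A B b A) \<notin> T \<union> SA" unfolding T_def SA_def
        using n7[OF disj b a0 a1(1)] n8[OF disj b _ a0] n9[OF disj b _ a0] a1
          n13[OF disj _ _ b] by fastforce }
    then show ?thesis unfolding SB_def by blast
  qed
  have d3: "(T \<union> SA \<union> SB) \<inter> DD = {}"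
  proof -
    { fix a b assume a: "a \<in> A" and b: "b \<in> B"
      obtain a' where a': "a' \<in> A" "a' \<noteq> a" using oA by blast
      obtain b' where b': "b' \<in> B" "b' \<noteq> b" using oB by blast
      have "gr (rD A B a b) \<notin> T" unfolding T_def
        using n10[OF disj a a'(1) b] n11[OF disj a a'(1) b] n12[OF disj a a'(1) b] a' by auto
      moreover have "gr (rD A B a b) \<notin> SA" unfolding SA_def
        using n14[OF disj _ a b b'(1)] b' by fastforce
      moreover have "gr (rD A B a b) \<notin> SB" unfolding SB_def
        using n15[OF disj a a'(1) _ b] a' by fastforce
      ultimately have "gr (rD A B a b) \<notin> T \<union> SA \<union> SB" by blast }
    then show ?thesis unfolding DD_def by auto
  qed
  have fin: "finite T" "finite SA" "finite SB" "finite DD"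
    unfolding T_def SA_def SB_def DD_def using assms by auto
  have "fam A B = T \<union> SA \<union> SB \<union> DD"
    unfolding fam_def T_def SA_def SB_def DD_def by blast
  then have "card (fam A B) = card T + card SA + card SB + card DD"
    using fin d1 d2 d3 by (simp add: card_Un_disjoint)
  then show ?thesis unfolding eq using cT cSA cSB cDD by simp
qed

end
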